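(* For $N\ge1$ let $U=-e^{2\pi i/N}\begin{pmatrix}1/2&-\sqrt{3}/2\\ \sqrt3/2&1/2\end{pmatrix}$, $|\psi_i\rangle=(U^i|0\rangle)^{\otimes N}$ ($i=0,1,2$), each with prior $1/3$, shared among $N$ parties each holding one qubit. Let $P^{opt}_N$ be the optimal minimum-error success probability and $P^{LOCC}_N$ the supremum of success probabilities achievable by $N$-party LOCC measurements. Then $\lim_{N\to\infty}P^{LOCC}_N=\lim_{N\to\infty}P^{opt}_N=1$; in particular $P^{opt}_N-P^{LOCC}_N\to0$.
   Context: The success probability of a three-outcome POVM $\{\Pi_i\}$ is $\tfrac13\sum_i\langle\psi_i|\Pi_i|\psi_i\rangle$. $N$-party LOCC means measurements implementable by local operations on each party's qubit together with classical communication among the parties. *)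

theory Defs
  imports Complex_Main
begin

text \<open>N-qubit register: computational basis indexed by bool lists of length N
  (entry k = qubit of party k; False = |0>, True = |1>).\<close>

type_synonym qvec = "bool list \<Rightarrow> complex"
type_synonym qop = "bool list \<Rightarrow> bool list \<Rightarrow> complex"
type_synonym op2 = "bool \<Rightarrow> bool \<Rightarrow> complex"
type_synonym vec2 = "bool \<Rightarrow> complex"

definition bits :: "nat \<Rightarrow> bool list set" where
  "bits N = {xs. length xs = N}"

definition mv :: "nat \<Rightarrow> qop \<Rightarrow> qvec \<Rightarrow> qvec" where
  "mv N M v = (\<lambda>x. \<Sum>y\<in>bits N. M x y * v y)"

definition inner :: "nat \<Rightarrow> qvec \<Rightarrow> qvec \<Rightarrow> complex" where
  "inner N u v = (\<Sum>x\<in>bits N. cnj (u x) * v x)"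

definition idop :: qop where
  "idop x y = (if x = y then 1 else 0)"

definition psd :: "nat \<Rightarrow> qop \<Rightarrow> bool" where
  "psd N M \<longleftrightarrow> (\<forall>v. inner N v (mv N M v) \<in> \<real> \<and> 0 \<le> Re (inner N v (mv N M v)))"

definition povm3 :: "nat \<Rightarrow> (nat \<Rightarrow> qop) \<Rightarrow> bool" where
  "povm3 N P \<longleftrightarrow> (\<forall>i<3. psd N (P i)) \<and>
     (\<forall>x\<in>bits N. \<forall>y\<in>bits N. (\<Sum>i<3. P i x y) = idop x y)"

definition success :: "nat \<Rightarrow> (nat \<Rightarrow> qop) \<Rightarrow> (nat \<Rightarrow> qvec) \<Rightarrow> real" where
  "success N P \<psi> = (1/3) * (\<Sum>i<3. Re (inner N (\<psi> i) (mv N (P i) (\<psi> i))))"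

definition P_opt :: "nat \<Rightarrow> (nat \<Rightarrow> qvec) \<Rightarrow> real" where
  "P_opt N \<psi> = Sup {success N P \<psi> | P. povm3 N P}"

text \<open>At a node, party k applies a local instrument
  (Kraus operators on its qubit, K^dag K summing to identity), announces the outcome,
  and the protocol continues in the subtree for that outcome.\<close>

datatype locc = Guess nat | Measure nat "(op2 \<times> locc) list"

definition local_op :: "nat \<Rightarrow> op2 \<Rightarrow> qop" where
  "local_op k A x y =
     (if length x = length y \<and> (\<forall>j<length x. j \<noteq> k \<longrightarrow> x ! j = y ! j)
      then A (x ! k) (y ! k) else 0)"

definition kraus_complete :: "op2 list \<Rightarrow> bool" where
  "kraus_complete Ks \<longleftrightarrow>
     (\<forall>a b. sum_list (map (\<lambda>K. \<Sum>c\<in>UNIV. cnj (K c a) * K c b) Ks) = (if a = b then 1 else 0))"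

inductive wf_locc :: "nat \<Rightarrow> locc \<Rightarrow> bool" for N where
  "j < 3 \<Longrightarrow> wf_locc N (Guess j)"
| "k < N \<Longrightarrow> kraus_complete (map fst cs) \<Longrightarrow> \<forall>p\<in>set cs. wf_locc N (snd p)
     \<Longrightarrow> wf_locc N (Measure k cs)"

text \<open>Probability (for unnormalised post-measurement vector v) of ending with guess i.\<close>
fun guess_prob :: "nat \<Rightarrow> locc \<Rightarrow> qvec \<Rightarrow> nat \<Rightarrow> real" where
  "guess_prob N (Guess j) v i = (if j = i then Re (inner N v v) else 0)"
| "guess_prob N (Measure k cs) v i =
     sum_list (map (\<lambda>p. guess_prob N (snd p) (mv N (local_op k (fst p)) v) i) cs)"

definition locc_success :: "nat \<Rightarrow> locc \<Rightarrow> (nat \<Rightarrow> qvec) \<Rightarrow> real" where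
  "locc_success N T \<psi> = (1/3) * (\<Sum>i<3. guess_prob N T (\<psi> i) i)"

definition P_LOCC :: "nat \<Rightarrow> (nat \<Rightarrow> qvec) \<Rightarrow> real" where
  "P_LOCC N \<psi> = Sup {locc_success N T \<psi> | T. wf_locc N T}"

definition app2 :: "op2 \<Rightarrow> vec2 \<Rightarrow> vec2" where
  "app2 A u = (\<lambda>a. \<Sum>b\<in>UNIV. A a b * u b)"

definition ket0 :: vec2 where
  "ket0 a = (if a then 0 else 1)"

definition Rot :: op2 where
  "Rot a b = (if \<not> a \<and> \<not> b then 1/2 else if \<not> a \<and> b then - (sqrt 3 / 2)
              else if a \<and> \<not> b then sqrt 3 / 2 else 1/2)"

definition Umat :: "nat \<Rightarrow> op2" where
  "Umat N a b = - exp (2 * complex_of_real pi * \<i> / of_nat N) * Rot a b"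

definition psi :: "nat \<Rightarrow> nat \<Rightarrow> qvec" where
  "psi N i = (\<lambda>x. \<Prod>k<length x. ((app2 (Umat N) ^^ i) ket0) (x ! k))"

end

theory Submission imports Defs begin

lemma finite_bits[simp]: "finite (bits N)"
proof -
  have "bits N = {xs. set xs \<subseteq> UNIV \<and> length xs = N}" by (auto simp: bits_def)
  thus ?thesis using finite_lists_length_eq[of "UNIV::bool set" N] by simp
qed

lemma sum_bits_Suc: "(\<Sum>x\<in>bits (Suc n). g x) = (\<Sum>b\<in>UNIV. \<Sum>xs\<in>bits n. g (b # xs))"
proof -
  have e: "bits (Suc n) = (\<lambda>(b,xs). b#xs) ` (UNIV \<times> bits n)"
    by (auto simp: bits_def length_Suc_conv image_iff)
  have i: "inj_on (\<lambda>(b,xs). b#xs) (UNIV \<times> bits n)" by (auto simp: inj_on_def)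
  show ?thesis unfolding e sum.reindex[OF i] sum.cartesian_product by (rule sum.cong) auto
qed

lemma bits_0[simp]: "bits 0 = {[]}" by (auto simp: bits_def)

definition pv :: "(nat \<Rightarrow> vec2) \<Rightarrow> qvec" where
  "pv f x = (\<Prod>k<length x. f k (x ! k))"

lemma pv_Cons: "pv f (b # xs) = f 0 b * pv (\<lambda>k. f (Suc k)) xs"
  unfolding pv_def length_Cons prod.lessThan_Suc_shift by simp

lemma inner_pv: "inner N (pv f) (pv g) = (\<Prod>k<N. \<Sum>a\<in>UNIV. cnj (f k a) * g k a)"
proof (induction N arbitrary: f g)
  case 0 then show ?case by (simp add: inner_def pv_def)
next
  case (Suc n)
  have "inner (Suc n) (pv f) (pv g) = (\<Sum>b\<in>UNIV. \<Sum>xs\<in>bits n. cnj (f 0 b) * g 0 b *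
        (cnj (pv (\<lambda>k. f (Suc k)) xs) * pv (\<lambda>k. g (Suc k)) xs))"
    unfolding inner_def sum_bits_Suc pv_Cons by (simp add: algebra_simps)
  also have "\<dots> = (\<Sum>b\<in>UNIV. cnj (f 0 b) * g 0 b) * inner n (pv (\<lambda>k. f (Suc k))) (pv (\<lambda>k. g (Suc k)))"
    by (simp add: inner_def sum_product)
  also have "\<dots> = (\<Prod>k<Suc n. \<Sum>a\<in>UNIV. cnj (f k a) * g k a)"
    unfolding Suc.IH by (simp only: prod.lessThan_Suc_shift)
  finally show ?case .
qed

definition agree :: "nat \<Rightarrow> bool list \<Rightarrow> bool list \<Rightarrow> bool" where
  "agree k x y \<longleftrightarrow> length x = length y \<and> (\<forall>j<length x. j \<noteq> k \<longrightarrow> x ! j = y ! j)"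

lemma local_op_agree: "local_op k A x y = (if agree k x y then A (x!k) (y!k) else 0)"
  by (simp add: local_op_def agree_def)

lemma sum_local:
  assumes x: "x \<in> bits N" and k: "k < N"
  shows "(\<Sum>y\<in>bits N. local_op k A x y * g y) = (\<Sum>c\<in>UNIV. A (x!k) c * g (x[k:=c]))"
proof -
  have lx: "length x = N" using x by (simp add: bits_def)
  have inj: "inj (\<lambda>c. x[k:=c])"
    by (rule injI) (metis k lx nth_list_update_eq)
  have "(\<Sum>c\<in>UNIV. A (x!k) c * g (x[k:=c])) = (\<Sum>y\<in>range (\<lambda>c. x[k:=c]). A (x!k) (y!k) * g y)"
    unfolding sum.reindex[OF inj] using k lx by simp
  also have "\<dots> = (\<Sum>y\<in>bits N. local_op k A x y * g y)"
  proof (rule sum.mono_neutral_cong_left)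
    show "range (\<lambda>c. x[k:=c]) \<subseteq> bits N" using lx by (auto simp: bits_def)
    show "\<forall>y\<in>bits N - range (\<lambda>c. x[k:=c]). local_op k A x y * g y = 0"
    proof
      fix y assume y: "y \<in> bits N - range (\<lambda>c. x[k:=c])"
      have "\<not> agree k x y"
      proof
        assume a: "agree k x y"
        have "y = x[k := y!k]"
          using a k lx by (auto simp: agree_def list_eq_iff_nth_eq nth_list_update)
        thus False using y by auto
      qed
      thus "local_op k A x y * g y = 0" by (simp add: local_op_agree)
    qed
    show "\<And>y. y \<in> range (\<lambda>c. x[k:=c]) \<Longrightarrow> A (x!k) (y!k) * g y = local_op k A x y * g y"
      using k lx by (auto simp: local_op_agree agree_def nth_list_update)
  qed simp
  finally show ?thesis by simp
qed

lemma mv_local_pv: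
  assumes x: "x \<in> bits N" and k: "k < N"
  shows "mv N (local_op k A) (pv f) x = pv (f(k := app2 A (f k))) x"
proof -
  have lx: "length x = N" using x by (simp add: bits_def)
  have kk: "k \<in> {..<N}" using k by simp
  have p: "pv h z = h k (z!k) * (\<Prod>j\<in>{..<N}-{k}. h j (z!j))" if "length z = N" for h z
    unfolding pv_def that using prod.remove[OF _ kk] by simp
  have q: "(\<Prod>j\<in>{..<N}-{k}. f j (x[k:=c]!j)) = (\<Prod>j\<in>{..<N}-{k}. f j (x!j))" for c
    by (rule prod.cong) auto
  have "mv N (local_op k A) (pv f) x = (\<Sum>c\<in>UNIV. A (x!k) c * pv f (x[k:=c]))"
    unfolding mv_def using sum_local[OF x k] .
  also have "\<dots> = (\<Sum>c\<in>UNIV. A (x!k) c * (f k c * (\<Prod>j\<in>{..<N}-{k}. f j (x!j))))"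
    using p[of "x[k:=_]" f] lx k q by simp
  also have "\<dots> = pv (f(k := app2 A (f k))) x"
  proof -
    have r: "(\<Prod>j\<in>{..<N}-{k}. (f(k := app2 A (f k))) j (x!j)) = (\<Prod>j\<in>{..<N}-{k}. f j (x!j))"
      by (rule prod.cong) auto
    show ?thesis using p[OF lx, of "f(k := app2 A (f k))"] unfolding r
      by (simp add: app2_def sum_distrib_right mult.assoc)
  qed
  finally show ?thesis .
qed

definition mm :: "nat \<Rightarrow> qop \<Rightarrow> qop \<Rightarrow> qop" where
  "mm N A B x y = (\<Sum>z\<in>bits N. A x z * B z y)"

definition adj :: "qop \<Rightarrow> qop" where "adj A x y = cnj (A y x)"

definition adj2 :: "op2 \<Rightarrow> op2" where "adj2 A a b = cnj (A b a)"

lemma mv_mm: "mv N (mm N A B) v = mv N A (mv N B v)"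
  unfolding mv_def mm_def
  by (auto simp: sum_distrib_left sum_distrib_right mult.assoc intro!: ext sum.swap)

lemma inner_adj: "inner N u (mv N (adj A) w) = inner N (mv N A u) w"
  unfolding inner_def mv_def adj_def
  by (auto simp: sum_distrib_left sum_distrib_right mult_ac cnj_sum intro: sum.swap)

lemma local_adj: "adj (local_op k A) = local_op k (adj2 A)"
  by (auto simp: adj_def adj2_def local_op_def intro!: ext)

lemma agree_upd: "k < length x \<Longrightarrow> agree k (x[k:=c]) y = agree k x y"
  by (auto simp: agree_def nth_list_update)

lemma mm_local:
  assumes x: "x \<in> bits N" and y: "y \<in> bits N" and k: "k < N"
  shows "mm N (local_op k A) (local_op k B) x y = local_op k (\<lambda>a b. \<Sum>c\<in>UNIV. A a c * B c b) x y"
proof -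
  have lx: "length x = N" using x by (simp add: bits_def)
  have "mm N (local_op k A) (local_op k B) x y = (\<Sum>c\<in>UNIV. A (x!k) c * local_op k B (x[k:=c]) y)"
    unfolding mm_def using sum_local[OF x k] .
  also have "\<dots> = local_op k (\<lambda>a b. \<Sum>c\<in>UNIV. A a c * B c b) x y"
    using k lx by (simp add: local_op_agree agree_upd)
  finally show ?thesis .
qed

lemma sum_list_local:
  "sum_list (map (\<lambda>p. local_op k (h p) x y) cs) = local_op k (\<lambda>a b. sum_list (map (\<lambda>p. h p a b) cs)) x y"
  by (induction cs) (auto simp: local_op_def)

lemma local_id: "k < N \<Longrightarrow> x \<in> bits N \<Longrightarrow> y \<in> bits N \<Longrightarrow> local_op k (\<lambda>a b. if a = b then 1 else 0) x y = idop x y"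
  by (auto simp: local_op_def idop_def bits_def list_eq_iff_nth_eq)

lemma sum_sum_list_swap:
  "(\<Sum>y\<in>A. sum_list (map (\<lambda>p. g p y) cs)) = sum_list (map (\<lambda>p. \<Sum>y\<in>A. g p y) cs)"
  by (induction cs) (auto simp: sum.distrib)

lemma mult_sum_list: "(c::complex) * sum_list (map f cs) = sum_list (map (\<lambda>p. c * f p) cs)"
  by (induction cs) (auto simp: algebra_simps)

lemma Re_sum_list: "Re (sum_list (map f cs)) = sum_list (map (\<lambda>p. Re (f p)) cs)"
  by (induction cs) auto

lemma Reals_sum_list: "(\<forall>p\<in>set cs. f p \<in> \<real>) \<Longrightarrow> sum_list (map f cs) \<in> \<real>"
  by (induction cs) auto

fun E :: "nat \<Rightarrow> locc \<Rightarrow> nat \<Rightarrow> qop" where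
  "E N (Guess j) i = (\<lambda>x y. if j = i then idop x y else 0)"
| "E N (Measure k cs) i = (\<lambda>x y. sum_list (map (\<lambda>p.
      mm N (adj (local_op k (fst p))) (mm N (E N (snd p) i) (local_op k (fst p))) x y) cs))"

lemma mv_sum_list: "mv N (\<lambda>x y. sum_list (map (\<lambda>p. F p x y) cs)) v
   = (\<lambda>x. sum_list (map (\<lambda>p. mv N (F p) v x) cs))"
  unfolding mv_def
  by (auto intro!: ext simp: mult.commute[of _ "v _"] mult_sum_list sum_sum_list_swap)

lemma inner_sum_list: "inner N v (\<lambda>x. sum_list (map (\<lambda>p. F p x) cs))
   = sum_list (map (\<lambda>p. inner N v (F p)) cs)"
  unfolding inner_def by (simp add: mult_sum_list sum_sum_list_swap)

lemma inner_E_Measure: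
  "inner N v (mv N (E N (Measure k cs) i) v) = sum_list (map (\<lambda>p.
     inner N (mv N (local_op k (fst p)) v) (mv N (E N (snd p) i) (mv N (local_op k (fst p)) v))) cs)"
  by (simp only: E.simps mv_sum_list inner_sum_list mv_mm inner_adj)

lemma mv_idop: "x \<in> bits N \<Longrightarrow> mv N idop v x = v x"
proof -
  assume x: "x \<in> bits N"
  have "mv N idop v x = (\<Sum>y\<in>bits N. if y = x then v y else 0)"
    unfolding mv_def idop_def by (rule sum.cong) auto
  thus ?thesis using x by simp
qed

lemma inner_cong: "(\<And>x. x \<in> bits N \<Longrightarrow> u x = u' x) \<Longrightarrow> (\<And>x. x \<in> bits N \<Longrightarrow> w x = w' x)
   \<Longrightarrow> inner N u w = inner N u' w'"
  unfolding inner_def by (rule sum.cong) auto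

lemma mv_cong: "(\<And>x. x \<in> bits N \<Longrightarrow> u x = u' x) \<Longrightarrow> mv N M u = mv N M u'"
  unfolding mv_def by (intro ext sum.cong) auto

lemma inner_idop: "inner N v (mv N idop v) = inner N v v"
  by (rule inner_cong) (auto simp: mv_idop)

lemma inner_self: "inner N v v = complex_of_real (\<Sum>x\<in>bits N. (cmod (v x))^2)"
proof -
  have "cnj (v x) * v x = complex_of_real ((cmod (v x))^2)" for x
    by (subst complex_norm_square) (simp add: mult.commute)
  thus ?thesis unfolding inner_def of_real_sum by simp
qed

lemma guess_prob_E: "guess_prob N T v i = Re (inner N v (mv N (E N T i) v))"
proof (induction T arbitrary: v)
  case (Guess j)
  show ?case
  proof (cases "j = i")
    case True
    then show ?thesis by (simp add: inner_idop)
  next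
    case False
    then show ?thesis by (simp add: inner_def mv_def)
  qed
next
  case (Measure k cs)
  show ?case unfolding inner_E_Measure Re_sum_list guess_prob.simps
    by (rule arg_cong[where f=sum_list], rule map_cong[OF refl], rule Measure.IH) auto
qed

lemma psd_E: "psd N (E N T i)"
proof (induction T)
  case (Guess j)
  show ?case
  proof (cases "j = i")
    case True
    then show ?thesis by (simp add: psd_def inner_idop inner_self sum_nonneg)
  next
    case False
    then show ?thesis by (simp add: psd_def inner_def mv_def)
  qed
next
  case (Measure k cs)
  have ps: "psd N (E N (snd p) i)" if "p \<in> set cs" for p
    using Measure.IH[of p "snd p"] that by (cases p) auto
  show ?case unfolding psd_def inner_E_Measure Re_sum_list
  proof
    fix v
    show "sum_list (map (\<lambda>p. inner N (mv N (local_op k (fst p)) v)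
           (mv N (E N (snd p) i) (mv N (local_op k (fst p)) v))) cs) \<in> \<real> \<and>
          0 \<le> sum_list (map (\<lambda>p. Re (inner N (mv N (local_op k (fst p)) v)
           (mv N (E N (snd p) i) (mv N (local_op k (fst p)) v)))) cs)"
      using ps by (auto simp: psd_def intro!: Reals_sum_list sum_list_nonneg)
  qed
qed


lemma sum3_mm:
  assumes "\<forall>z\<in>bits N. \<forall>w\<in>bits N. (\<Sum>i<3. F i z w) = idop z w"
  shows "(\<Sum>i<(3::nat). mm N A (mm N (F i) B) x y) = mm N A B x y"
proof -
  have "(\<Sum>i<(3::nat). mm N A (mm N (F i) B) x y)
      = (\<Sum>z\<in>bits N. A x z * (\<Sum>w\<in>bits N. (\<Sum>i<(3::nat). F i z w) * B w y))"
    unfolding mm_def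
    by (simp add: sum_distrib_left sum_distrib_right mult.assoc sum.swap[of _ "{..<3::nat}"])
  also have "\<dots> = (\<Sum>z\<in>bits N. A x z * (\<Sum>w\<in>bits N. idop z w * B w y))"
    using assms by (intro sum.cong refl arg_cong2[where f="(*)"]) auto
  also have "\<dots> = mm N A B x y"
  proof -
    have "(\<Sum>w\<in>bits N. idop z w * B w y) = B z y" if "z \<in> bits N" for z
    proof -
      have "(\<Sum>w\<in>bits N. idop z w * B w y) = (\<Sum>w\<in>bits N. if w = z then B w y else 0)"
        unfolding idop_def by (rule sum.cong) auto
      thus ?thesis using that by simp
    qed
    thus ?thesis unfolding mm_def by (intro sum.cong) auto
  qed
  finally show ?thesis .
qed

lemma E_sum:
  assumes "wf_locc N T"
  shows "\<forall>x\<in>bits N. \<forall>y\<in>bits N. (\<Sum>i<3. E N T i x y) = idop x y"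
  using assms
proof (induction T rule: wf_locc.induct)
  case (1 j)
  then show ?case by (auto simp: lessThan_Suc numeral_3_eq_3)
next
  case (2 k cs)
  show ?case
  proof (intro ballI)
    fix x y assume x: "x \<in> bits N" and y: "y \<in> bits N"
    have "(\<Sum>i<3. E N (Measure k cs) i x y) = sum_list (map (\<lambda>p. \<Sum>i<3.
        mm N (adj (local_op k (fst p))) (mm N (E N (snd p) i) (local_op k (fst p))) x y) cs)"
      by (simp add: sum_sum_list_swap)
    also have "\<dots> = sum_list (map (\<lambda>p. mm N (adj (local_op k (fst p))) (local_op k (fst p)) x y) cs)"
      using 2(3) by (intro arg_cong[where f=sum_list] map_cong refl sum3_mm) auto
    also have "\<dots> = sum_list (map (\<lambda>p. local_op k (\<lambda>a b. \<Sum>c\<in>UNIV. adj2 (fst p) a c * fst p c b) x y) cs)"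
      using x y 2(1) by (simp add: local_adj mm_local)
    also have "\<dots> = local_op k (\<lambda>a b. if a = b then 1 else 0) x y"
      unfolding sum_list_local using 2(2) by (simp add: kraus_complete_def adj2_def o_def)
    also have "\<dots> = idop x y" using local_id[OF 2(1) x y] .
    finally show "(\<Sum>i<3. E N (Measure k cs) i x y) = idop x y" .
  qed
qed

lemma povm_E: "wf_locc N T \<Longrightarrow> povm3 N (E N T)"
  using E_sum psd_E unfolding povm3_def by blast

lemma locc_success_E: "locc_success N T \<psi> = success N (E N T) \<psi>"
  unfolding locc_success_def success_def guess_prob_E ..

lemma sum3: "(\<Sum>j<(3::nat). f j) = f 0 + f 1 + f 2"
  unfolding numeral_3_eq_3 by (simp add: lessThan_Suc numeral_2_eq_2 ac_simps)

lemma povm_le: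
  assumes P: "povm3 N P" and i: "i < 3"
  shows "Re (inner N v (mv N (P i) v)) \<le> Re (inner N v v)"
proof -
  have "(\<Sum>j<3. inner N v (mv N (P j) v)) = inner N v (mv N (\<lambda>x y. \<Sum>j<3. P j x y) v)"
    unfolding inner_def mv_def
    by (simp add: sum_distrib_left sum_distrib_right mult.assoc sum.swap[of _ "{..<3::nat}"])
  also have "\<dots> = inner N v (mv N idop v)"
    using P unfolding povm3_def mv_def by (intro inner_cong refl sum.cong) auto
  also have "\<dots> = inner N v v" by (rule inner_idop)
  finally have s: "(\<Sum>j<3. Re (inner N v (mv N (P j) v))) = Re (inner N v v)"
    by (metis Re_sum)
  have nn: "\<And>j. j < 3 \<Longrightarrow> 0 \<le> Re (inner N v (mv N (P j) v))"
    using P unfolding povm3_def psd_def by blast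
  have "(\<Sum>j<3. Re (inner N v (mv N (P j) v))) = Re (inner N v (mv N (P 0) v)) +
      Re (inner N v (mv N (P 1) v)) + Re (inner N v (mv N (P 2) v))"
    by (rule sum3)
  thus ?thesis using s nn[of 0] nn[of 1] nn[of 2] i
    by (auto simp: less_Suc_eq numeral_3_eq_3)
qed

lemma success_le:
  assumes P: "povm3 N P" and n: "\<And>i. i < 3 \<Longrightarrow> Re (inner N (\<psi> i) (\<psi> i)) = 1"
  shows "success N P \<psi> \<le> 1"
proof -
  have "(\<Sum>i<3. Re (inner N (\<psi> i) (mv N (P i) (\<psi> i)))) \<le> (\<Sum>i<(3::nat). 1)"
  proof (rule sum_mono)
    fix i assume "i \<in> {..<(3::nat)}"
    thus "Re (inner N (\<psi> i) (mv N (P i) (\<psi> i))) \<le> 1"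
      using povm_le[OF P, of i "\<psi> i"] n[of i] by simp
  qed
  thus ?thesis unfolding success_def by simp
qed


definition w :: "nat \<Rightarrow> nat \<Rightarrow> vec2" where
  "w N i = (app2 (Umat N) ^^ i) ket0"

lemma psi_pv: "psi N i = pv (\<lambda>_. w N i)"
  by (auto simp: psi_def pv_def w_def intro!: ext)

definition cc :: "nat \<Rightarrow> complex" where
  "cc N = - exp (2 * complex_of_real pi * \<i> / of_nat N)"

lemma cmod_cc: "cmod (cc N) = 1"
  unfolding cc_def by simp

definition vv :: "nat \<Rightarrow> bool \<Rightarrow> real" where
  "vv j a = (if j = 0 then (if a then 0 else 1) else if j = 1 then (if a then sqrt 3/2 else 1/2)
             else (if a then sqrt 3/2 else -1/2))"

definition uu :: "nat \<Rightarrow> bool \<Rightarrow> real" where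
  "uu j a = (if j = 0 then (if a then 1 else 0) else if j = 1 then (if a then -1/2 else sqrt 3/2)
             else (if a then 1/2 else sqrt 3/2))"

lemma Umat_cc: "Umat N a b = cc N * Rot a b"
  by (simp add: Umat_def cc_def)

lemma w_rep: "i < 3 \<Longrightarrow> w N i a = cc N ^ i * complex_of_real (vv i a)"
proof -
  assume "i < 3"
  hence "i = 0 \<or> i = 1 \<or> i = 2" by arith
  moreover have "w N 0 a = cc N ^ 0 * complex_of_real (vv 0 a)"
    by (simp add: w_def ket0_def vv_def)
  moreover have w1: "w N 1 = (\<lambda>a. cc N * complex_of_real (vv 1 a))"
    by (auto simp: w_def ket0_def vv_def app2_def UNIV_bool Umat_cc Rot_def intro!: ext)
  moreover have "w N 2 a = cc N ^ 2 * complex_of_real (vv 2 a)"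
  proof -
    have "w N 2 = app2 (Umat N) (w N 1)" by (simp add: w_def numeral_2_eq_2)
    hence "w N 2 a = (\<Sum>b\<in>UNIV. cc N * Rot a b * (cc N * complex_of_real (vv 1 b)))"
      unfolding w1 app2_def Umat_cc by simp
    also have "\<dots> = cc N ^ 2 * complex_of_real (vv 2 a)"
      by (cases a) (simp_all add: UNIV_bool Rot_def vv_def power2_eq_square algebra_simps
           flip: of_real_mult)
    finally show ?thesis .
  qed
  ultimately show ?thesis by auto
qed

definition nrm2 :: "vec2 \<Rightarrow> real" where
  "nrm2 g = (\<Sum>a\<in>UNIV. (cmod (g a))^2)"

lemma cnj_sum_nrm2: "(\<Sum>a\<in>UNIV. cnj (g a) * g a) = complex_of_real (nrm2 g)"
proof -
  have "cnj (g x) * g x = complex_of_real ((cmod (g x))^2)" for x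
    by (subst complex_norm_square) (simp add: mult.commute)
  thus ?thesis unfolding nrm2_def of_real_sum by simp
qed

definition proj :: "(bool \<Rightarrow> real) \<Rightarrow> op2" where
  "proj v a b = complex_of_real (v a * v b)"

definition dd :: "(bool \<Rightarrow> real) \<Rightarrow> (bool \<Rightarrow> real) \<Rightarrow> real" where
  "dd v r = v False * r False + v True * r True"

lemma nrm2_scaled: "cmod z = 1 \<Longrightarrow> nrm2 (\<lambda>a. z * complex_of_real (r a)) = (r False)^2 + (r True)^2"
  by (simp add: nrm2_def UNIV_bool norm_mult)

lemma app2_proj: "app2 (proj v) (\<lambda>a. z * complex_of_real (r a)) = (\<lambda>a. z * complex_of_real (v a * dd v r))"
  by (auto simp: app2_def proj_def UNIV_bool dd_def algebra_simps intro!: ext)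

lemma vv_norm: "j < 3 \<Longrightarrow> (vv j False)^2 + (vv j True)^2 = 1"
  by (auto simp: vv_def power_divide)

lemma uu_norm: "j < 3 \<Longrightarrow> (uu j False)^2 + (uu j True)^2 = 1"
  by (auto simp: uu_def power_divide)

lemma nrm2_w: "i < 3 \<Longrightarrow> nrm2 (w N i) = 1"
proof -
  assume i: "i < 3"
  have "w N i = (\<lambda>a. cc N ^ i * complex_of_real (vv i a))" using w_rep[OF i] by auto
  thus ?thesis using nrm2_scaled[of "cc N ^ i" "vv i"] vv_norm[OF i] by (simp add: norm_power cmod_cc)
qed

lemma nrm2_proj_w:
  assumes i: "i < 3" and v: "(v False)^2 + (v True)^2 = 1"
  shows "nrm2 (app2 (proj v) (w N i)) = (dd v (vv i))^2"
proof -
  have "w N i = (\<lambda>a. cc N ^ i * complex_of_real (vv i a))" using w_rep[OF i] by auto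
  hence "nrm2 (app2 (proj v) (w N i)) = (v False * dd v (vv i))^2 + (v True * dd v (vv i))^2"
    using nrm2_scaled[of "cc N ^ i" "\<lambda>a. v a * dd v (vv i)"] by (simp add: app2_proj norm_power cmod_cc)
  also have "\<dots> = (dd v (vv i))^2 * ((v False)^2 + (v True)^2)" by (simp add: algebra_simps power2_eq_square)
  finally show ?thesis using v by simp
qed

lemma norm_psi: "i < 3 \<Longrightarrow> Re (inner N (psi N i) (psi N i)) = 1"
  unfolding psi_pv inner_pv cnj_sum_nrm2 by (simp add: nrm2_w)


definition ch :: "nat set \<Rightarrow> nat" where
  "ch S = (if 0 \<notin> S then 0 else if 1 \<notin> S then 1 else 2)"

function prot :: "nat \<Rightarrow> nat \<Rightarrow> nat set \<Rightarrow> locc" where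
  "prot N k S = (if N \<le> k then Guess (ch S) else
     Measure k [(proj (vv (k mod 3)), prot N (Suc k) S),
                (proj (uu (k mod 3)), prot N (Suc k) (insert (k mod 3) S))])"
  by pat_completeness auto
termination by (relation "measure (\<lambda>(N,k,S). N - k)") auto

declare prot.simps[simp del]

definition qv :: "nat \<Rightarrow> nat \<Rightarrow> real" where "qv j i = (dd (vv j) (vv i))^2"
definition qu :: "nat \<Rightarrow> nat \<Rightarrow> real" where "qu j i = (dd (uu j) (vv i))^2"

function RR :: "nat \<Rightarrow> nat \<Rightarrow> nat \<Rightarrow> nat set \<Rightarrow> real" where
  "RR N i k S = (if N \<le> k then (if ch S = i then 1 else 0) else
     qv (k mod 3) i * RR N i (Suc k) S + qu (k mod 3) i * RR N i (Suc k) (insert (k mod 3) S))"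
  by pat_completeness auto
termination by (relation "measure (\<lambda>(N,i,k,S). N - k)") auto

declare RR.simps[simp del]

lemma kraus_proj: "j < 3 \<Longrightarrow> kraus_complete [proj (vv j), proj (uu j)]"
proof -
  assume "j < 3"
  hence "j = 0 \<or> j = 1 \<or> j = 2" by arith
  thus ?thesis
    by (auto simp: kraus_complete_def proj_def vv_def uu_def UNIV_bool power2_eq_square
          algebra_simps simp flip: of_real_mult of_real_add)
qed

lemma wf_prot: "wf_locc N (prot N k S)"
proof (induction N k S rule: prot.induct)
  case (1 N k S)
  show ?case
  proof (cases "N \<le> k")
    case True
    then show ?thesis by (simp add: prot.simps ch_def wf_locc.intros)
  next
    case False
    show ?thesis
      apply (subst prot.simps)
      using False 1 kraus_proj[of "k mod 3"] by (auto intro!: wf_locc.intros(2))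
  qed
qed

lemma guess_prob_cong: "(\<And>x. x \<in> bits N \<Longrightarrow> u x = u' x) \<Longrightarrow> guess_prob N T u i = guess_prob N T u' i"
  unfolding guess_prob_E by (metis inner_cong mv_cong)

lemma prot_gp:
  assumes i: "i < 3"
  shows "(\<forall>j. k \<le> j \<longrightarrow> f j = w N i) \<Longrightarrow>
     guess_prob N (prot N k S) (pv f) i = (\<Prod>j<N. nrm2 (f j)) * RR N i k S"
proof (induction N k S arbitrary: f rule: prot.induct)
  case (1 N k S)
  show ?case
  proof (cases "N \<le> k")
    case True
    have "Re (inner N (pv f) (pv f)) = (\<Prod>j<N. nrm2 (f j))"
      unfolding inner_pv cnj_sum_nrm2 by (simp flip: of_real_prod)
    then show ?thesis using True by (simp add: prot.simps RR.simps)
  next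
    case False
    define j where "j = k mod 3"
    have j3: "j < 3" by (simp add: j_def)
    have fk: "f k = w N i" using 1(3) by simp
    have kk: "k \<in> {..<N}" using False by simp
    have pr: "(\<Prod>j<N. nrm2 ((f(k := g)) j)) = nrm2 g * (\<Prod>j\<in>{..<N}-{k}. nrm2 (f j))" for g
    proof -
      have "(\<Prod>j\<in>{..<N}-{k}. nrm2 ((f(k := g)) j)) = (\<Prod>j\<in>{..<N}-{k}. nrm2 (f j))"
        by (rule prod.cong) auto
      thus ?thesis using prod.remove[OF _ kk, of "\<lambda>j. nrm2 ((f(k := g)) j)"] by simp
    qed
    have pf: "(\<Prod>j<N. nrm2 (f j)) = (\<Prod>j\<in>{..<N}-{k}. nrm2 (f j))"
      using pr[of "f k"] unfolding fun_upd_triv by (simp add: fk nrm2_w[OF i])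
    have step: "guess_prob N (prot N (Suc k) S') (mv N (local_op k (proj v)) (pv f)) i
        = (\<Prod>j\<in>{..<N}-{k}. nrm2 (f j)) * ((dd v (vv i))^2 * RR N i (Suc k) S')"
      if IH: "\<And>f. \<forall>j. Suc k \<le> j \<longrightarrow> f j = w N i \<Longrightarrow>
         guess_prob N (prot N (Suc k) S') (pv f) i = (\<Prod>j<N. nrm2 (f j)) * RR N i (Suc k) S'"
       and v: "(v False)^2 + (v True)^2 = 1" for S' v
    proof -
      have "guess_prob N (prot N (Suc k) S') (mv N (local_op k (proj v)) (pv f)) i
          = guess_prob N (prot N (Suc k) S') (pv (f(k := app2 (proj v) (f k)))) i"
        using False by (intro guess_prob_cong mv_local_pv) auto
      also have "\<dots> = (\<Prod>j<N. nrm2 ((f(k := app2 (proj v) (f k))) j)) * RR N i (Suc k) S'"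
        using 1(3) by (intro IH) auto
      also have "\<dots> = (\<Prod>j\<in>{..<N}-{k}. nrm2 (f j)) * ((dd v (vv i))^2 * RR N i (Suc k) S')"
        unfolding pr fk nrm2_proj_w[OF i v] by simp
      finally show ?thesis .
    qed
    have "guess_prob N (prot N k S) (pv f) i
       = guess_prob N (prot N (Suc k) S) (mv N (local_op k (proj (vv (k mod 3)))) (pv f)) i
       + guess_prob N (prot N (Suc k) (insert (k mod 3) S)) (mv N (local_op k (proj (uu (k mod 3)))) (pv f)) i"
      using False by (simp add: prot.simps)
    also have "\<dots> = (\<Prod>j<N. nrm2 (f j)) * RR N i k S"
      using step[OF 1(1)[OF False] vv_norm[OF j3[unfolded j_def]]] step[OF 1(2)[OF False] uu_norm[OF j3[unfolded j_def]]]
      using False by (simp add: pf RR.simps[of N i k S] qv_def qu_def algebra_simps)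
    finally show ?thesis .
  qed
qed


lemma three_cases: "(i::nat) < 3 \<Longrightarrow> i = 0 \<or> i = 1 \<or> i = 2" by arith

lemma qv_val: "i < 3 \<Longrightarrow> j < 3 \<Longrightarrow> qv j i = (if j = i then 1 else 1/4)"
  by (drule three_cases, drule three_cases)
     (auto simp: qv_def dd_def vv_def power2_eq_square algebra_simps)

lemma qu_val: "i < 3 \<Longrightarrow> j < 3 \<Longrightarrow> qu j i = (if j = i then 0 else 3/4)"
  by (drule three_cases, drule three_cases)
     (auto simp: qu_def dd_def vv_def uu_def power2_eq_square algebra_simps)

lemma RR_nonneg: "0 \<le> RR N i k S"
proof (induction N i k S rule: RR.induct)
  case (1 N i k S)
  show ?case using 1 by (subst RR.simps) (auto simp: qv_def qu_def)
qed

definition cnt :: "nat \<Rightarrow> nat \<Rightarrow> nat \<Rightarrow> nat" where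
  "cnt N k j = card {m. k \<le> m \<and> m < N \<and> m mod 3 = j}"

lemma cnt_N: "N \<le> k \<Longrightarrow> cnt N k j = 0"
proof -
  assume "N \<le> k"
  hence "{m. k \<le> m \<and> m < N \<and> m mod 3 = j} = {}" by auto
  thus ?thesis unfolding cnt_def by simp
qed

lemma cnt_step: "k < N \<Longrightarrow> cnt N k j = cnt N (Suc k) j + (if k mod 3 = j then 1 else 0)"
proof -
  assume k: "k < N"
  have fin: "finite {m. Suc k \<le> m \<and> m < N \<and> m mod 3 = j}" by (rule finite_subset[of _ "{..<N}"]) auto
  show ?thesis
  proof (cases "k mod 3 = j")
    case True
    have "{m. k \<le> m \<and> m < N \<and> m mod 3 = j} = insert k {m. Suc k \<le> m \<and> m < N \<and> m mod 3 = j}"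
      using k True by auto
    thus ?thesis unfolding cnt_def using fin True by simp
  next
    case False
    have "{m. k \<le> m \<and> m < N \<and> m mod 3 = j} = {m. Suc k \<le> m \<and> m < N \<and> m mod 3 = j}"
      using k False by (auto simp: Suc_le_eq order_le_less)
    thus ?thesis unfolding cnt_def using False by simp
  qed
qed

lemma cnt_ge: "j < 3 \<Longrightarrow> N div 3 \<le> cnt N 0 j"
proof -
  assume j: "j < 3"
  have "inj_on (\<lambda>t. 3 * t + j) {..<N div 3}" by (auto simp: inj_on_def)
  hence "card ((\<lambda>t. 3 * t + j) ` {..<N div 3}) = N div 3" by (simp add: card_image)
  moreover have "(\<lambda>t. 3 * t + j) ` {..<N div 3} \<subseteq> {m. 0 \<le> m \<and> m < N \<and> m mod 3 = j}"
  proof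
    fix m assume "m \<in> (\<lambda>t. 3 * t + j) ` {..<N div 3}"
    then obtain t where t: "t < N div 3" "m = 3 * t + j" by auto
    have "3 * t + 3 \<le> 3 * (N div 3)" using t(1) by simp
    also have "\<dots> \<le> N" by simp
    finally show "m \<in> {m. 0 \<le> m \<and> m < N \<and> m mod 3 = j}" using t j by auto
  qed
  moreover have "finite {m. 0 \<le> m \<and> m < N \<and> m mod 3 = j}" by (rule finite_subset[of _ "{..<N}"]) auto
  ultimately show ?thesis unfolding cnt_def by (metis card_mono)
qed

definition tt :: "nat \<Rightarrow> nat \<Rightarrow> nat set \<Rightarrow> nat \<Rightarrow> nat \<Rightarrow> real" where
  "tt N i S k j = (if j \<in> S \<or> j = i then 0 else (1/4)^cnt N k j)"

lemma tt_step: "k < N \<Longrightarrow> tt N i S k j = (if j = k mod 3 then tt N i S (Suc k) j / 4 else tt N i S (Suc k) j)"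
  by (auto simp: tt_def cnt_step)

lemma tt_ins: "tt N i (insert j S) m j' = (if j' = j then 0 else tt N i S m j')"
  by (auto simp: tt_def)

lemma tt_nonneg: "0 \<le> tt N i S k j" by (simp add: tt_def)

lemma RR_ge: "i < 3 \<Longrightarrow> i \<notin> S \<Longrightarrow> 1 - (tt N i S k 0 + tt N i S k 1 + tt N i S k 2) \<le> RR N i k S"
proof (induction N i k S rule: RR.induct)
  case (1 N i k S)
  show ?case
  proof (cases "N \<le> k")
    case True
    then show ?thesis using 1(3,4) three_cases[OF 1(3)]
      by (subst RR.simps) (auto simp: tt_def cnt_N ch_def)
  next
    case False
    define j where "j = k mod 3"
    have j3: "j < 3" by (simp add: j_def)
    have RRk: "RR N i k S = qv j i * RR N i (Suc k) S + qu j i * RR N i (Suc k) (insert j S)"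
      using False by (subst RR.simps) (simp add: j_def)
    have IH1: "1 - (tt N i S (Suc k) 0 + tt N i S (Suc k) 1 + tt N i S (Suc k) 2) \<le> RR N i (Suc k) S"
      using 1(1)[OF False 1(3,4)] .
    have ts: "tt N i S k j' = (if j' = j then tt N i S (Suc k) j' / 4 else tt N i S (Suc k) j')" for j'
      using tt_step[OF _] False by (simp add: j_def)
    have nn: "0 \<le> tt N i S (Suc k) j'" for j' by (rule tt_nonneg)
    have A0: "0 \<le> RR N i (Suc k) S" by (rule RR_nonneg)
    show ?thesis
    proof (cases "j = i")
      case True
      have "tt N i S (Suc k) i = 0" by (simp add: tt_def)
      then show ?thesis using IH1 RRk True qv_val[OF 1(3) j3] qu_val[OF 1(3) j3] ts[of 0] ts[of 1] ts[of 2]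
        by (auto split: if_splits)
    next
      case ji: False
      show ?thesis
      proof (cases "j \<in> S")
        case True
        have "tt N i S (Suc k) j = 0" using True by (simp add: tt_def)
        moreover have "insert j S = S" using True by auto
        ultimately show ?thesis using IH1 RRk ji qv_val[OF 1(3) j3] qu_val[OF 1(3) j3] ts[of 0] ts[of 1] ts[of 2]
          by (auto split: if_splits)
      next
        case False': False
        have IH2: "1 - (tt N i (insert j S) (Suc k) 0 + tt N i (insert j S) (Suc k) 1 + tt N i (insert j S) (Suc k) 2)
            \<le> RR N i (Suc k) (insert j S)"
          using 1(2)[OF False 1(3)] 1(4) ji by (simp add: j_def)
        show ?thesis using IH1 IH2 RRk ji qv_val[OF 1(3) j3] qu_val[OF 1(3) j3] ts[of 0] ts[of 1] ts[of 2]
            nn[of 0] nn[of 1] nn[of 2] three_cases[OF j3]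
          unfolding tt_ins by (auto split: if_splits)
      qed
    qed
  qed
qed


lemma prot_success: "1 - 3 * (1/4::real)^(N div 3) \<le> locc_success N (prot N 0 {}) (psi N)"
proof -
  have g: "1 - 3 * (1/4::real)^(N div 3) \<le> guess_prob N (prot N 0 {}) (psi N i) i" if i: "i < 3" for i
  proof -
    have "guess_prob N (prot N 0 {}) (psi N i) i = (\<Prod>j<N. nrm2 (w N i)) * RR N i 0 {}"
      unfolding psi_pv by (rule prot_gp[OF i]) auto
    hence e: "guess_prob N (prot N 0 {}) (psi N i) i = RR N i 0 {}" by (simp add: nrm2_w[OF i])
    have t: "tt N i {} 0 j \<le> (1/4::real)^(N div 3)" if "j < 3" for j
      unfolding tt_def using cnt_ge[OF that] by (auto intro!: power_decreasing)
    show ?thesis unfolding e using RR_ge[OF i, of "{}" N 0] t[of 0] t[of 1] t[of 2] by simp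
  qed
  show ?thesis unfolding locc_success_def sum3 using g[of 0] g[of 1] g[of 2] by simp
qed

lemma bounds: "1 - 3 * (1/4::real)^(N div 3) \<le> P_LOCC N (psi N) \<and>
   P_LOCC N (psi N) \<le> P_opt N (psi N) \<and> P_opt N (psi N) \<le> 1"
proof -
  let ?A = "{locc_success N T (psi N) | T. wf_locc N T}"
  let ?B = "{success N P (psi N) | P. povm3 N P}"
  have AB: "?A \<subseteq> ?B" using locc_success_E povm_E by blast
  have wf0: "wf_locc N (Guess 0)" by (rule wf_locc.intros) simp
  have Ane: "?A \<noteq> {}" using wf0 by blast
  have Bne: "?B \<noteq> {}" using Ane AB by blast
  have Ble: "\<forall>x\<in>?B. x \<le> 1" using success_le norm_psi by blast
  have bB: "bdd_above ?B" using Ble by (auto simp: bdd_above_def)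
  have bA: "bdd_above ?A" using bdd_above_mono[OF bB AB] .
  have "locc_success N (prot N 0 {}) (psi N) \<in> ?A" using wf_prot by blast
  hence "locc_success N (prot N 0 {}) (psi N) \<le> P_LOCC N (psi N)"
    unfolding P_LOCC_def using bA by (rule cSup_upper)
  moreover have "P_LOCC N (psi N) \<le> P_opt N (psi N)"
    unfolding P_LOCC_def P_opt_def by (rule cSup_subset_mono[OF Ane bB AB])
  moreover have "P_opt N (psi N) \<le> 1"
    unfolding P_opt_def using Bne Ble by (intro cSup_least) auto
  ultimately show ?thesis using prot_success[of N] by linarith
qed

lemma delta_lim: "(\<lambda>N. 1 - 3 * (1/4::real)^(N div 3)) \<longlonglongrightarrow> 1"
proof -
  have f: "filterlim (\<lambda>N::nat. N div 3) sequentially sequentially"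
    unfolding filterlim_at_top
  proof
    fix Z :: nat
    show "eventually (\<lambda>N. Z \<le> N div 3) sequentially"
      using eventually_ge_at_top[of "3 * Z"] by eventually_elim auto
  qed
  have "(\<lambda>N. (1/4::real)^(N div 3)) \<longlonglongrightarrow> 0"
    using filterlim_compose[OF LIMSEQ_power_zero[of "1/4::real"] f] by simp
  from tendsto_diff[OF tendsto_const[of 1] tendsto_mult[OF tendsto_const[of 3] this]]
  show ?thesis by simp
qed

theorem mainTheorem14:
  shows "(\<lambda>N. P_LOCC N (psi N)) \<longlonglongrightarrow> 1 \<and> (\<lambda>N. P_opt N (psi N)) \<longlonglongrightarrow> 1
    \<and> (\<lambda>N. P_opt N (psi N) - P_LOCC N (psi N)) \<longlonglongrightarrow> 0"
proof -
  have b2: "P_LOCC N (psi N) \<le> 1" for N using bounds[of N] by linarith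
  have L: "(\<lambda>N. P_LOCC N (psi N)) \<longlonglongrightarrow> 1"
    by (rule tendsto_sandwich[OF _ _ delta_lim tendsto_const[of 1]]) (use bounds b2 in auto)
  have b3: "1 - 3 * (1/4::real)^(N div 3) \<le> P_opt N (psi N)" for N using bounds[of N] by linarith
  have O: "(\<lambda>N. P_opt N (psi N)) \<longlonglongrightarrow> 1"
    by (rule tendsto_sandwich[OF _ _ delta_lim tendsto_const[of 1]]) (use bounds b3 in auto)
  show ?thesis using L O tendsto_diff[OF O L] by simp
qed

end
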